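(* On the interval $[0,1]$: (i) the function $\dfrac{\cos(\frac12\pi x)}{1-x^2}$ attains its global maximum at $x=0$; (ii) the function $\dfrac{(x^2+1)\cos^2(\frac12\pi x)}{(1-x^2)^2}$ attains its global minimum at $x=0$.
   Context: At $x=1$ both functions have removable singularities and are understood as their continuous extensions. *)

theory Defs
  imports "HOL-Analysis.Analysis"
begin

text \<open>The two functions of Lemma 6, with the removable singularity at x = 1
  filled in by its limit value (continuous extension).\<close>

definition f1 :: "real \<Rightarrow> real" where
  "f1 x = (if x = 1 then pi / 4 else cos (pi * x / 2) / (1 - x\<^sup>2))"

definition f2 :: "real \<Rightarrow> real" where
  "f2 x = (if x = 1 then pi\<^sup>2 / 8
           else (x\<^sup>2 + 1) * (cos (pi * x / 2))\<^sup>2 / (1 - x\<^sup>2)\<^sup>2)"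

end

theory Submission
  imports Defs
begin


lemma cos_lb2: "cos (x::real) \<ge> 1 - x^2/2"
proof -
  obtain t where "cos x = (\<Sum>m<2. cos_coeff m * x ^ m) + (cos(t + 1/2 * real 2 * pi) / fact 2) * x ^ 2"
    using Maclaurin_cos_expansion by blast
  moreover have "cos (t + 1/2 * real 2 * pi) = - cos t" by simp
  moreover have "(\<Sum>m<2. cos_coeff m * x ^ m) = 1"
    by (simp add: cos_coeff_def lessThan_nat_numeral fact_numeral)
  moreover have "-1 \<le> cos t" "cos t \<le> 1" by auto
  moreover have "cos t * x^2 \<le> 1 * x^2" by (rule mult_right_mono) auto
  ultimately show ?thesis by (simp add: fact_numeral)
qed

lemma cos_ub4: "cos (x::real) \<le> 1 - x^2/2 + x^4/24"
proof -
  obtain t where "cos x = (\<Sum>m<4. cos_coeff m * x ^ m) + (cos(t + 1/2 * real 4 * pi) / fact 4) * x ^ 4"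
    using Maclaurin_cos_expansion by blast
  moreover have "cos (t + 1/2 * real 4 * pi) = cos t" by simp
  moreover have "(\<Sum>m<4. cos_coeff m * x ^ m) = 1 - x^2/2"
    by (simp add: cos_coeff_def lessThan_nat_numeral fact_numeral)
  moreover have "-1 \<le> cos t" "cos t \<le> 1" by auto
  moreover have "cos t * x^4 \<le> 1 * x^4" by (rule mult_right_mono) auto
  ultimately show ?thesis by (simp add: fact_numeral)
qed

lemma sin_lb3: assumes "(x::real) \<ge> 0" shows "sin x \<ge> x - x^3/6"
proof -
  obtain t where "sin x = (\<Sum>m<3. sin_coeff m * x ^ m) + (sin(t + 1/2 * real 3 * pi) / fact 3) * x ^ 3"
    using Maclaurin_sin_expansion by blast
  moreover have "sin (t + 1/2 * real 3 * pi) = - cos t"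
  proof -
    have "t + 1/2 * real 3 * pi = (t + pi/2) + pi" by simp
    then show ?thesis by (simp only: sin_periodic_pi) (simp add: sin_add)
  qed
  moreover have "(\<Sum>m<3. sin_coeff m * x ^ m) = x"
    by (simp add: sin_coeff_def lessThan_nat_numeral fact_numeral)
  moreover have "-1 \<le> cos t" "cos t \<le> 1" by auto
  moreover have "cos t * x^3 \<le> 1 * x^3" by (rule mult_right_mono) (auto simp: assms)
  ultimately show ?thesis by (simp add: fact_numeral)
qed

lemma pi_sq: "9.8696 \<le> pi^2" "pi^2 \<le> 9.8697"
proof -
  have a: "3.141592653588 \<le> pi" "pi \<le> 3.1415926535899" using pi_approx by auto
  have "(3.141592653588::real)^2 \<le> pi^2" using a by (intro power_mono) auto
  moreover have "9.8696 \<le> (3.141592653588::real)^2" by (simp add: power2_eq_square)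
  ultimately show "9.8696 \<le> pi^2" by linarith
  have "pi^2 \<le> (3.1415926535899::real)^2" using a by (intro power_mono) auto
  moreover have "(3.1415926535899::real)^2 \<le> 9.8697" by (simp add: power2_eq_square)
  ultimately show "pi^2 \<le> 9.8697" by linarith
qed


lemma polyA:
  fixes y :: real assumes "0 \<le> y" "y \<le> 0.36"
  shows "(1-y)^2 \<le> (1+y)*(1-1.2337125*y)^2"
proof -
  define k :: real where "k = 1.2337125"
  have h: "0 \<le> y*((0.36-y)*((1+2*k-k^2) - k^2*(y+0.36)))"
    using assms unfolding k_def by (intro mult_nonneg_nonneg) (auto simp: power2_eq_square)
  have G: "0 \<le> (3-2*k) + 0.36*(k^2-2*k-1) + k^2*0.1296" unfolding k_def by (simp add: power2_eq_square)
  have id: "(1+y)*(1-k*y)^2 - (1-y)^2 = y*((3-2*k) + 0.36*(k^2-2*k-1) + k^2*0.1296) + y*((0.36-y)*((1+2*k-k^2) - k^2*(y+0.36)))"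
    by algebra
  have "0 \<le> y*((3-2*k) + 0.36*(k^2-2*k-1) + k^2*0.1296)" using G assms by simp
  then show ?thesis using id h unfolding k_def by linarith
qed
lemma polyB:
  fixes t :: real assumes "0 \<le> t" "t \<le> 0.4"
  shows "(2-t)^2 \<le> (2-2*t+t^2)*(24674/10000*(1 - 8225/10000*t^2))"
proof -
  have h1: "t^2 \<le> 4/10*t" using assms mult_right_mono[of t "4/10" t] by (simp add: power2_eq_square)
  have h2: "t^4 \<le> t^3" using assms mult_left_mono[of t 1 "t^3"] by (simp add: power_eq_if)
  have h3: "0 \<le> t^3" using assms by simp
  have id: "(2-2*t+t^2)*(24674/10000*(1 - 8225/10000*t^2)) - (2-t)^2 = 9348/10000 - 9348/10000*t - 2591473/1000000*t^2 + 4058873/1000000*t^3 - 20294365/10000000*t^4"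
    by algebra
  have "0 \<le> 9348/10000 - 9348/10000*t - 2591473/1000000*t^2 + 4058873/1000000*t^3 - 20294365/10000000*t^4"
    using h1 h2 h3 assms by linarith
  then have "0 \<le> (2-2*t+t^2)*(24674/10000*(1 - 8225/10000*t^2)) - (2-t)^2" by (simp only: id)
  then show ?thesis by (simp only: diff_ge_0_iff_ge)
qed

lemma cos_sin_shift: "cos (pi*x/2) = sin (pi*(1-x)/2)"
proof -
  have e: "pi*(1-x)/2 = pi/2 - pi*x/2" by (simp add: field_simps)
  show ?thesis unfolding e by (simp add: sin_diff)
qed

lemma part1:
  fixes x :: real assumes "0 \<le> x" "x < 1"
  shows "cos (pi*x/2) \<le> 1 - x^2"
proof (cases "x \<le> 9/10")
  case True
  define q where "q = pi^2"
  have q: "98696/10000 \<le> q" "q \<le> 98697/10000" using pi_sq unfolding q_def by simp_all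
  have "x^2 \<le> (9/10)^2" by (rule power_mono) (use True assms in auto)
  then have x2: "x^2 \<le> 81/100" by (simp add: power2_eq_square)
  have "q*x^2 \<le> 98697/10000 * (81/100)"
    using q x2 by (intro mult_mono) auto
  then have h1: "1 - 7994457/48000000 \<le> 1 - q*x^2/48" by simp
  have h2: "98696/80000 \<le> q/8" using q by simp
  have "(98696/80000) * (1 - 7994457/48000000) \<le> (q/8) * (1 - q*x^2/48)"
    using h1 h2 by (intro mult_mono) auto
  then have m: "1 \<le> (q/8) * (1 - q*x^2/48)" by simp
  have eq: "(pi*x/2)^2/2 - (pi*x/2)^4/24 = x^2*((q/8)*(1 - q*x^2/48))"
    unfolding q_def by (simp add: power_mult_distrib power_divide field_simps)
  have "x^2 * 1 \<le> x^2*((q/8)*(1 - q*x^2/48))" using m by (intro mult_left_mono) auto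
  then show ?thesis using cos_ub4[of "pi*x/2"] eq by linarith
next
  case False
  define t where "t = 1 - x"
  have t: "0 \<le> t" "t \<le> 1/10" using False assms unfolding t_def by auto
  have "cos (pi*x/2) = sin (pi*t/2)" unfolding t_def by (rule cos_sin_shift)
  also have "\<dots> \<le> pi*t/2" using t by (intro sin_x_le_x) auto
  also have "\<dots> = t*(pi/2)" by simp
  also have "\<dots> \<le> t*(2-t)" using t pi_approx by (intro mult_left_mono) auto
  also have "\<dots> = 1 - x^2" unfolding t_def by algebra
  finally show ?thesis .
qed

lemma part2:
  fixes x :: real assumes "0 \<le> x" "x < 1"
  shows "(1-x^2)^2 \<le> (x^2+1)*(cos (pi*x/2))^2"
proof (cases "x \<le> 6/10")
  case True
  define q where "q = pi^2"
  define y where "y = x^2"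
  define k :: real where "k = 98697/80000"
  have q: "98696/10000 \<le> q" "q \<le> 98697/10000" using pi_sq unfolding q_def by simp_all
  have "x^2 \<le> (6/10)^2" by (rule power_mono) (use True assms in auto)
  then have y: "0 \<le> y" "y \<le> 36/100" unfolding y_def by (simp_all add: power2_eq_square)
  have a: "(pi*x/2)^2/2 = q/8*y" unfolding q_def y_def by (simp add: power_mult_distrib power_divide field_simps)
  have "q/8*y \<le> k*y" using q y unfolding k_def by (intro mult_right_mono) auto
  moreover have "k*y \<le> k*(36/100)" using y unfolding k_def by (intro mult_left_mono) auto
  moreover have "k*(36/100) \<le> 1" unfolding k_def by simp
  ultimately have ky: "q/8*y \<le> k*y" "k*y \<le> 1" by linarith+
  have c: "1 - k*y \<le> cos (pi*x/2)" using cos_lb2[of "pi*x/2"] a ky by linarith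
  have "(1 - k*y)^2 \<le> (cos (pi*x/2))^2" using c ky by (intro power_mono) auto
  then have "(1+y)*(1 - k*y)^2 \<le> (1+y)*(cos (pi*x/2))^2" using y by (intro mult_left_mono) auto
  moreover have "(1-y)^2 \<le> (1+y)*(1-k*y)^2" using polyA y unfolding k_def by simp
  ultimately show ?thesis unfolding y_def by (simp add: add.commute)
next
  case False
  define q where "q = pi^2"
  define t where "t = 1 - x"
  define s where "s = pi*t/2"
  have q: "98696/10000 \<le> q" "q \<le> 98697/10000" using pi_sq unfolding q_def by simp_all
  have t: "0 \<le> t" "t \<le> 4/10" using False assms unfolding t_def by auto
  have "t^2 \<le> (4/10)^2" by (rule power_mono) (use t in auto)
  then have t2: "0 \<le> t^2" "t^2 \<le> 16/100" by (simp_all add: power2_eq_square)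
  have s2: "s^2 = q/4*t^2" unfolding s_def q_def by (simp add: power_mult_distrib power_divide field_simps)
  have "q/4*t^2 \<le> 98697/40000*(16/100)" using q t2 by (intro mult_mono) auto
  then have s2b: "s^2 \<le> 1" using s2 by simp
  have s0: "0 \<le> s" unfolding s_def using t by simp
  have cs: "cos (pi*x/2) = sin s" unfolding s_def t_def by (rule cos_sin_shift)
  have s3: "s^3 = s * (s^2)" by (simp add: power3_eq_cube power2_eq_square)
  have "s - s^3/6 \<le> sin s" using sin_lb3[OF s0] .
  moreover have "s - s^3/6 = s*(1 - s^2/6)" using s3 by (simp add: right_diff_distrib)
  moreover have "0 \<le> s*(1 - s^2/6)" using s0 s2b by simp
  ultimately have "(s*(1 - s^2/6))^2 \<le> (sin s)^2" by (intro power_mono) auto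
  moreover have "(s*(1 - s^2/6))^2 = s^2*(1 - s^2/6)^2" by algebra
  moreover have "s^2*(1 - s^2/3) \<le> s^2*(1 - s^2/6)^2"
  proof (rule mult_left_mono)
    have "(1 - s^2/6)^2 = 1 - s^2/3 + (s^2/6)^2" by (simp add: power2_diff field_simps)
    then show "1 - s^2/3 \<le> (1 - s^2/6)^2" by simp
  qed simp
  ultimately have c1: "s^2*(1 - s^2/3) \<le> (cos (pi*x/2))^2" using cs by simp
  have e1: "s^2*(1 - s^2/3) = t^2*((q/4)*(1 - q/12*t^2))" unfolding s2 by (simp add: field_simps power2_eq_square)
  have "q/12*t^2 \<le> 8225/10000*t^2" using q t2 by (intro mult_right_mono) auto
  then have l2: "1 - 8225/10000*t^2 \<le> 1 - q/12*t^2" by simp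
  have l3: "0 \<le> 1 - 8225/10000*t^2" using t2 by simp
  have "24674/10000*(1 - 8225/10000*t^2) \<le> (q/4)*(1 - q/12*t^2)"
    using q l2 l3 by (intro mult_mono) auto
  then have "t^2*(24674/10000*(1 - 8225/10000*t^2)) \<le> t^2*((q/4)*(1 - q/12*t^2))"
    using t2 by (intro mult_left_mono) auto
  then have c2: "t^2*(24674/10000*(1 - 8225/10000*t^2)) \<le> (cos (pi*x/2))^2"
    using c1 e1 by linarith
  have pos: "0 \<le> x^2+1" by simp
  have "(x^2+1)*(t^2*(24674/10000*(1 - 8225/10000*t^2))) \<le> (x^2+1)*(cos (pi*x/2))^2"
    using c2 pos by (rule mult_left_mono)
  moreover have "(2-t)^2 \<le> (2-2*t+t^2)*(24674/10000*(1 - 8225/10000*t^2))" using polyB[OF t] .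
  then have "t^2*(2-t)^2 \<le> t^2*((2-2*t+t^2)*(24674/10000*(1 - 8225/10000*t^2)))"
    using t2 by (intro mult_left_mono) auto
  moreover have "(1-x^2)^2 = t^2*(2-t)^2" unfolding t_def by algebra
  moreover have xt: "x^2+1 = 2-2*t+t^2" unfolding t_def by algebra
  moreover have "t^2*((2-2*t+t^2)*(24674/10000*(1 - 8225/10000*t^2))) = (x^2+1)*(t^2*(24674/10000*(1 - 8225/10000*t^2)))"
    unfolding xt by (simp only: mult_ac)
  ultimately show ?thesis by linarith
qed

theorem lemma6:
  shows "(\<forall>x\<in>{0..1::real}. f1 x \<le> f1 0) \<and> (\<forall>x\<in>{0..1::real}. f2 0 \<le> f2 x)"
proof (intro conjI ballI)
  fix x :: real assume x: "x \<in> {0..1}"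
  have f10: "f1 0 = 1" by (simp add: f1_def)
  show "f1 x \<le> f1 0"
  proof (cases "x = 1")
    case True then show ?thesis using f10 pi_approx by (simp add: f1_def)
  next
    case False
    then have x1: "0 \<le> x" "x < 1" using x by auto
    have "x*x \<le> x*1" using x1 by (intro mult_left_mono) auto
    then have "0 < 1 - x^2" using x1 by (simp add: power2_eq_square)
    then show ?thesis using part1[OF x1] False f10 by (simp add: f1_def)
  qed
next
  fix x :: real assume x: "x \<in> {0..1}"
  have f20: "f2 0 = 1" by (simp add: f2_def)
  show "f2 0 \<le> f2 x"
  proof (cases "x = 1")
    case True
    have "9 \<le> pi^2" using pi_sq by simp
    then show ?thesis using True f20 by (simp add: f2_def)
  next
    case False
    then have x1: "0 \<le> x" "x < 1" using x by auto
    have "x*x \<le> x*1" using x1 by (intro mult_left_mono) auto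
    then have "0 < 1 - x^2" using x1 by (simp add: power2_eq_square)
    then have "0 < (1 - x^2)^2" by simp
    then show ?thesis using part2[OF x1] False f20 by (simp add: f2_def le_divide_eq)
  qed
qed

end
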